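(* Let $p$ be a prime, let $A\subset\mathbb F_p$ be nonempty and let $\lambda$ be a probability measure on $\mathbb F_p$. Then $$\sum_{b\in\mathbb F_p^*}\lambda(b)\|1_A*1_{bA}\|_2\ll\left(\|\lambda\|_2+|A|^{-1/2}+|A|^{1/2}p^{-1/2}\right)^{c_0}|A|^{3/2},$$ with an absolute implied constant.
   Context: $\mathbb F_p^*=\mathbb F_p\setminus\{0\}$; $bA=\{ba:a\in A\}$; $1_A$ is the indicator function of $A$. A probability measure is $\lambda:\mathbb F_p\to\mathbb R_{\ge0}$ with $\sum\lambda=1$. $\|f\|_2=(\sum_{x\in\mathbb F_p}|f(x)|^2)^{1/2}$ and $f*g(x)=\sum_{y\in\mathbb F_p}f(y)g(x-y)$. $c_0>0$ is a fixed absolute constant (whose existence is a theorem of Bourgain) such that for every prime $p$ and all $A\subset\mathbb F_p$, $B\subset\mathbb F_p^*$ with $|A|\ge|B|$, $\sum_{b\in B}E(A,bA)\ll\min(p/|A|,|B|)^{-c_0}|A|^3|B|$, where $E(A,A')$ is the number of solutions of $a_1+a_1'=a_2+a_2'$ with $a_i\in A$, $a_i'\in A'$. *)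

theory Defs
  imports "HOL-Computational_Algebra.Primes" Complex_Main
begin

text \<open>F_p is modelled as the residues {0..<p} :: int set, arithmetic mod p.\<close>

definition Fp :: "int \<Rightarrow> int set" where
  "Fp p = {0..<p}"

definition Fp_star :: "int \<Rightarrow> int set" where
  "Fp_star p = {1..<p}"

definition dilate :: "int \<Rightarrow> int \<Rightarrow> int set \<Rightarrow> int set" where
  "dilate p b A = (\<lambda>a. (b * a) mod p) ` A"

definition energy :: "int \<Rightarrow> int set \<Rightarrow> int set \<Rightarrow> nat" where
  "energy p A A' = card {(a1, a1', a2, a2'). a1 \<in> A \<and> a1' \<in> A' \<and> a2 \<in> A \<and> a2' \<in> A'
      \<and> (a1 + a1') mod p = (a2 + a2') mod p}"

definition conv_ind :: "int \<Rightarrow> int set \<Rightarrow> int set \<Rightarrow> int \<Rightarrow> real" where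
  "conv_ind p A B x = (\<Sum>y\<in>Fp p. (if y \<in> A then 1 else 0) * (if (x - y) mod p \<in> B then 1 else 0))"

definition l2norm :: "int \<Rightarrow> (int \<Rightarrow> real) \<Rightarrow> real" where
  "l2norm p f = sqrt (\<Sum>x\<in>Fp p. (f x)\<^sup>2)"

definition prob_measure_Fp :: "int \<Rightarrow> (int \<Rightarrow> real) \<Rightarrow> bool" where
  "prob_measure_Fp p mu \<longleftrightarrow> (\<forall>x\<in>Fp p. mu x \<ge> 0) \<and> (\<Sum>x\<in>Fp p. mu x) = 1"

definition bourgain_bound :: "real \<Rightarrow> real \<Rightarrow> bool" where
  "bourgain_bound c0 K \<longleftrightarrow>
     (\<forall>p A B. prime p \<longrightarrow> A \<subseteq> Fp p \<longrightarrow> B \<subseteq> Fp_star p \<longrightarrow> card B \<le> card A \<longrightarrow>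
        (\<Sum>b\<in>B. real (energy p A (dilate p b A)))
          \<le> K * (min (real_of_int p / real (card A)) (real (card B))) powr (- c0)
               * real (card A) ^ 3 * real (card B))"

end

theory Submission imports Defs "HOL-Analysis.Convex" begin

lemma conv_card:
  "conv_ind p A A' x = real (card {y\<in>Fp p. y \<in> A \<and> (x - y) mod p \<in> A'})"
proof -
  have "conv_ind p A A' x = (\<Sum>y\<in>Fp p. if y \<in> A \<and> (x - y) mod p \<in> A' then 1 else 0)"
    unfolding conv_ind_def by (rule sum.cong) auto
  also have "\<dots> = (\<Sum>y\<in>{y\<in>Fp p. y \<in> A \<and> (x - y) mod p \<in> A'}. 1)"
    by (subst sum.inter_filter) (simp_all add: Fp_def)
  finally show ?thesis by simp
qed

lemma l2_energy:
  assumes p: "p > 0" and AA: "A \<subseteq> Fp p" "A' \<subseteq> Fp p"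
  shows "(l2norm p (conv_ind p A A'))\<^sup>2 \<le> real (energy p A A')"
proof -
  define S where "S x = {y\<in>Fp p. y \<in> A \<and> (x - y) mod p \<in> A'}" for x
  have finFp: "finite (Fp p)" by (simp add: Fp_def)
  have finS: "finite (S x)" for x unfolding S_def using finFp by simp
  have "(l2norm p (conv_ind p A A'))\<^sup>2 = (\<Sum>x\<in>Fp p. (conv_ind p A A' x)\<^sup>2)"
    unfolding l2norm_def by (simp add: sum_nonneg)
  also have "\<dots> = (\<Sum>x\<in>Fp p. real (card (S x \<times> S x)))"
    by (simp add: conv_card S_def card_cartesian_product power2_eq_square)
  also have "\<dots> = real (card (SIGMA x:Fp p. S x \<times> S x))"
    using finFp finS by simp
  also have "\<dots> \<le> real (energy p A A')"
  proof -
    define E where "E = {(a1, a1', a2, a2'). a1 \<in> A \<and> a1' \<in> A' \<and> a2 \<in> A \<and> a2' \<in> A'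
      \<and> (a1 + a1') mod p = (a2 + a2') mod p}"
    define f where "f = (\<lambda>(x::int,(y1::int,y2::int)). (y1, (x-y1) mod p, y2, (x-y2) mod p))"
    have finA: "finite A" "finite A'" using AA finFp finite_subset by auto
    have "E \<subseteq> A \<times> A' \<times> A \<times> A'" unfolding E_def by auto
    hence finE: "finite E" using finA by (meson finite_SigmaI finite_subset)
    have inj: "inj_on f (SIGMA x:Fp p. S x \<times> S x)"
    proof (rule inj_onI)
      fix u v assume u: "u \<in> (SIGMA x:Fp p. S x \<times> S x)" and v: "v \<in> (SIGMA x:Fp p. S x \<times> S x)"
        and eq: "f u = f v"
      obtain x y1 y2 where ux: "u = (x,(y1,y2))" by (cases u) auto
      obtain x' z1 z2 where vx: "v = (x',(z1,z2))" by (cases v) auto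
      have "x \<in> Fp p" "x' \<in> Fp p" using u v ux vx by auto
      hence xm: "x mod p = x" "x' mod p = x'" by (auto simp: Fp_def)
      from eq have e1: "y1 = z1" "y2 = z2" "(x-y1) mod p = (x'-z1) mod p" by (auto simp: f_def ux vx)
      have "x mod p = x' mod p"
        using e1 by (metis add_diff_cancel_left' mod_add_right_eq add.commute diff_add_cancel)
      then show "u = v" using xm ux vx e1 by simp
    qed
    have img: "f ` (SIGMA x:Fp p. S x \<times> S x) \<subseteq> E"
    proof
      fix w assume "w \<in> f ` (SIGMA x:Fp p. S x \<times> S x)"
      then obtain x y1 y2 where w: "w = f (x,(y1,y2))" and x: "x \<in> Fp p" and y: "y1 \<in> S x" "y2 \<in> S x"
        by auto
      have xm: "x mod p = x" using x by (auto simp: Fp_def)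
      have "(y1 + (x - y1) mod p) mod p = x mod p" by (simp add: mod_add_right_eq)
      moreover have "(y2 + (x - y2) mod p) mod p = x mod p" by (simp add: mod_add_right_eq)
      ultimately show "w \<in> E" using y unfolding E_def S_def w f_def by auto
    qed
    have "card (SIGMA x:Fp p. S x \<times> S x) \<le> card E"
      using card_inj_on_le[OF inj img finE] .
    thus ?thesis unfolding energy_def E_def by simp
  qed
  finally show ?thesis .
qed


lemma dilate_sub: "p > 0 \<Longrightarrow> dilate p b A \<subseteq> Fp p"
  by (auto simp: dilate_def Fp_def)

lemma sqrt_powr: "x \<ge> 0 \<Longrightarrow> sqrt (x powr a) = x powr (a/2)"
  by (simp add: powr_half_sqrt[symmetric] powr_powr)

lemma sqrt_cube: "(n::real) \<ge> 0 \<Longrightarrow> sqrt (n^3) = n powr (3/2)"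
proof -
  assume "n \<ge> 0"
  hence "n^3 = n powr 3 \<or> n = 0" by (cases "n = 0") (auto simp: powr_realpow)
  then show ?thesis using \<open>n \<ge> 0\<close> sqrt_powr[of n 3] by auto
qed

lemma cs_sqrt:
  fixes mu e :: "int \<Rightarrow> real"
  assumes "\<And>b. b \<in> B \<Longrightarrow> e b \<ge> 0"
  shows "(\<Sum>b\<in>B. mu b * sqrt (e b)) \<le> sqrt (\<Sum>b\<in>B. (mu b)\<^sup>2) * sqrt (\<Sum>b\<in>B. e b)"
proof -
  have "(\<Sum>b\<in>B. mu b * sqrt (e b))\<^sup>2 \<le> (\<Sum>b\<in>B. (mu b)\<^sup>2) * (\<Sum>b\<in>B. (sqrt (e b))\<^sup>2)"
    by (rule Cauchy_Schwarz_ineq_sum)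
  also have "(\<Sum>b\<in>B. (sqrt (e b))\<^sup>2) = (\<Sum>b\<in>B. e b)"
    using assms by (intro sum.cong) auto
  finally have "(\<Sum>b\<in>B. mu b * sqrt (e b))\<^sup>2 \<le> (\<Sum>b\<in>B. (mu b)\<^sup>2) * (\<Sum>b\<in>B. e b)" .
  hence "\<bar>\<Sum>b\<in>B. mu b * sqrt (e b)\<bar> \<le> sqrt ((\<Sum>b\<in>B. (mu b)\<^sup>2) * (\<Sum>b\<in>B. e b))"
    by (metis real_sqrt_abs real_sqrt_le_mono)
  thus ?thesis by (simp add: real_sqrt_mult)
qed


theorem corollary2:
  fixes c0 :: real
  assumes "c0 > 0"
    and "\<exists>K. bourgain_bound c0 K"
  shows "\<exists>C. \<forall>(p::int) A mu. prime p \<longrightarrow> A \<subseteq> Fp p \<longrightarrow> A \<noteq> {} \<longrightarrow> prob_measure_Fp p mu \<longrightarrow>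
      (\<Sum>b\<in>Fp_star p. mu b * l2norm p (conv_ind p A (dilate p b A)))
        \<le> C * (l2norm p mu + real (card A) powr (-1/2) + real (card A) powr (1/2) * real_of_int p powr (-1/2)) powr c0
             * real (card A) powr (3/2)"
proof -
  obtain K where bb: "bourgain_bound c0 K" using assms(2) by blast
  define K' where "K' = max K 0"
  have K'0: "K' \<ge> 0" by (simp add: K'_def)
  define C where "C = sqrt K' * 2 * 2 powr (c0/2) + sqrt K'"
  show ?thesis
  proof (intro exI allI impI)
    fix p :: int and A mu
    assume pr: "prime p" and AF: "A \<subseteq> Fp p" and Ane: "A \<noteq> {}" and pm: "prob_measure_Fp p mu"
    have p2: "p \<ge> 2" using pr by (simp add: prime_ge_2_int)
    have finFp: "finite (Fp p)" by (simp add: Fp_def)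
    have finS: "finite (Fp_star p)" by (simp add: Fp_star_def)
    have SF: "Fp_star p \<subseteq> Fp p" by (auto simp: Fp_star_def Fp_def)
    have cardS: "card (Fp_star p) = nat (p - 1)" by (simp add: Fp_star_def)
    have finA: "finite A" using AF finFp finite_subset by blast
    define n where "n = real (card A)"
    have n1: "n \<ge> 1" using Ane finA by (simp add: n_def Suc_le_eq card_gt_0_iff)
    have "card A \<le> card (Fp p)" using AF finFp card_mono by blast
    hence np: "n \<le> real_of_int p" using p2 by (simp add: n_def Fp_def)
    have mu0: "\<And>x. x \<in> Fp p \<Longrightarrow> mu x \<ge> 0" and mu1: "(\<Sum>x\<in>Fp p. mu x) = 1"
      using pm by (auto simp: prob_measure_Fp_def)
    have muS: "(\<Sum>b\<in>B. mu b) \<le> 1" if "B \<subseteq> Fp p" for B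
      using sum_mono2[OF finFp that, of mu] mu0 mu1 by auto
    define L where "L = l2norm p mu"
    have muL: "sqrt (\<Sum>b\<in>B. (mu b)\<^sup>2) \<le> L" if "B \<subseteq> Fp p" for B
      unfolding L_def l2norm_def
      by (rule real_sqrt_le_mono, rule sum_mono2[OF finFp that]) auto
    have L0: "L \<ge> 0" by (simp add: L_def l2norm_def sum_nonneg)
    define E where "E b = real (energy p A (dilate p b A))" for b
    have E0: "E b \<ge> 0" for b by (simp add: E_def)
    have bnd: "(\<Sum>b\<in>B. E b) \<le> K' * (min (real_of_int p / n) (real (card B))) powr (- c0) * n ^ 3 * real (card B)"
      if "B \<subseteq> Fp_star p" "card B \<le> card A" for B
    proof -
      have "(\<Sum>b\<in>B. E b) \<le> K * (min (real_of_int p / n) (real (card B))) powr (- c0) * n ^ 3 * real (card B)"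
        using bb pr AF that unfolding bourgain_bound_def E_def n_def by blast
      also have "\<dots> \<le> K' * (min (real_of_int p / n) (real (card B))) powr (- c0) * n ^ 3 * real (card B)"
        unfolding K'_def using n1 by (intro mult_right_mono) auto
      finally show ?thesis .
    qed
    have l2E: "l2norm p (conv_ind p A (dilate p b A)) \<le> sqrt (E b)" for b
    proof -
      have "(l2norm p (conv_ind p A (dilate p b A)))\<^sup>2 \<le> E b"
        unfolding E_def using l2_energy[OF _ AF dilate_sub] p2 by simp
      moreover have "l2norm p (conv_ind p A (dilate p b A)) \<ge> 0" by (simp add: l2norm_def sum_nonneg)
      ultimately show ?thesis using real_le_rsqrt by blast
    qed
    define S where "S = (\<Sum>b\<in>Fp_star p. mu b * sqrt (E b))"
    have LHS: "(\<Sum>b\<in>Fp_star p. mu b * l2norm p (conv_ind p A (dilate p b A))) \<le> S"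
      unfolding S_def using SF mu0 by (intro sum_mono mult_left_mono l2E) auto
    define D where "D = L + n powr (-1/2) + n powr (1/2) * real_of_int p powr (-1/2)"
    have nh: "n powr (-1/2) = 1 / sqrt n" using n1 by (simp add: powr_minus powr_half_sqrt inverse_eq_divide)
    have ph: "n powr (1/2) * real_of_int p powr (-1/2) = sqrt (n / p)"
      using n1 p2 by (simp add: powr_minus powr_half_sqrt real_sqrt_divide divide_simps inverse_eq_divide)
    have Dpos: "D > 0"
    proof -
      have "1 / sqrt n > 0" using n1 by simp
      moreover have "sqrt (n / p) \<ge> 0" using n1 p2 by simp
      ultimately show ?thesis unfolding D_def using L0 nh ph by linarith
    qed
    have n32: "n powr (3/2) = sqrt (n^3)" using n1 sqrt_cube by simp
    show "(\<Sum>b\<in>Fp_star p. mu b * l2norm p (conv_ind p A (dilate p b A))) \<le> C * D powr c0 * n powr (3/2)"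
      unfolding D_def[symmetric] n_def[symmetric] L_def[symmetric]
    proof (cases "D > 1")
      case True
      have Eb: "E b \<le> K' * n^3" if "b \<in> Fp_star p" for b
      proof -
        have "(\<Sum>b\<in>{b}. E b) \<le> K' * (min (real_of_int p / n) (real (card {b}))) powr (- c0) * n ^ 3 * real (card {b})"
          using that n1 by (intro bnd) (auto simp: n_def)
        moreover have "min (real_of_int p / n) 1 = 1" using np n1 by simp
        ultimately show ?thesis by simp
      qed
      have "S \<le> (\<Sum>b\<in>Fp_star p. mu b * sqrt (K' * n^3))"
        unfolding S_def using SF mu0 Eb by (intro sum_mono mult_left_mono) auto
      also have "\<dots> = (\<Sum>b\<in>Fp_star p. mu b) * sqrt (K' * n^3)" by (simp add: sum_distrib_right)
      also have "\<dots> \<le> sqrt (K' * n^3)" using muS[OF SF] SF mu0 K'0 n1 by (intro mult_left_le_one_le) (auto intro!: sum_nonneg)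
      also have "\<dots> = sqrt K' * n powr (3/2)" using n32 by (simp add: real_sqrt_mult)
      also have "\<dots> \<le> C * n powr (3/2)"
        unfolding C_def using K'0 by (intro mult_right_mono) auto
      also have "\<dots> \<le> C * D powr c0 * n powr (3/2)"
      proof -
        have "D powr c0 \<ge> 1" using True assms(1) by (simp add: ge_one_powr_ge_zero)
        moreover have "C \<ge> 0" unfolding C_def using K'0 by simp
        ultimately show ?thesis by (intro mult_right_mono) (auto simp: mult_le_cancel_left1)
      qed
      finally show ?thesis using LHS by linarith
    next
      case False
      hence D1: "D \<le> 1" by simp
      define x where "x = 1 / D^2"
      have x1: "x \<ge> 1" unfolding x_def using D1 Dpos by (simp add: power_le_one)
      have sq0: "sqrt (n / p) \<ge> 0" "1 / sqrt n \<ge> 0" using n1 p2 by simp_all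
      have "1 / sqrt n \<le> D" unfolding D_def using nh ph L0 sq0 by linarith
      hence "(1 / sqrt n)^2 \<le> D^2" using sq0 by (intro power_mono) auto
      hence "1 / n \<le> D^2" using n1 by (simp add: power_divide)
      hence xn: "x \<le> n" unfolding x_def using n1 Dpos by (simp add: divide_simps mult.commute)
      have LD: "L \<le> D" unfolding D_def using nh ph L0 sq0 by linarith
      have "sqrt (n / p) \<le> D" unfolding D_def using nh ph L0 sq0 by linarith
      hence "(sqrt (n / p))^2 \<le> D^2" using sq0 by (intro power_mono) auto
      hence "n / p \<le> D^2" using n1 p2 by simp
      hence xp: "x \<le> p / n" unfolding x_def using n1 Dpos p2 by (simp add: divide_simps mult.commute)
      define J where "J = nat \<lfloor>x\<rfloor>"
      have fl: "real J = real_of_int \<lfloor>x\<rfloor>" unfolding J_def using x1 by simp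
      have fc: "real_of_int \<lfloor>x\<rfloor> \<le> x" "x < real_of_int \<lfloor>x\<rfloor> + 1"
        using floor_correct[of x] by auto
      have "\<lfloor>x\<rfloor> \<ge> 1" using x1 by (simp add: le_floor_iff)
      hence fg: "real_of_int \<lfloor>x\<rfloor> \<ge> 1" by simp
      have Jx: "real J \<le> x" using fl fc by linarith
      have Jx2: "real J \<ge> x / 2" using fl fc fg x1 by linarith
      have "real J \<ge> 1" using fl fc fg x1 by linarith
      hence J1: "J \<ge> 1" by simp
      have JA: "J \<le> card A" using Jx xn n_def by linarith
      have "real J * real J \<le> n * (p / n)" using Jx xn xp x1 by (intro mult_mono) auto
      hence "real J * real J \<le> p" using n1 by simp
      hence "real J < p"
      proof (rule contrapos_pp)
        assume "\<not> real J < p"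
        hence "real J \<ge> p" by simp
        hence "real J * real J \<ge> real_of_int p * real_of_int p" using p2 by (intro mult_mono) auto
        moreover have "real_of_int p * real_of_int p \<ge> 2 * real_of_int p" using p2 by (intro mult_right_mono) auto
        ultimately show "\<not> real J * real J \<le> p" using p2 by linarith
      qed
      hence JS: "J \<le> card (Fp_star p)" using cardS by linarith
      have minJ: "min (real_of_int p / n) (real J) = real J" using Jx xp by simp
      define thr where "thr = K' * real J powr (- c0) * n ^ 3"
      have thr0: "thr \<ge> 0" unfolding thr_def using K'0 n1 by simp
      have bJ: "(\<Sum>b\<in>B. E b) \<le> real J * thr" if "B \<subseteq> Fp_star p" "card B = J" for B
        using bnd[OF that(1)] that JA minJ unfolding thr_def by (simp add: mult_ac)
      define T where "T = {b \<in> Fp_star p. E b > thr}"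
      have TS: "T \<subseteq> Fp_star p" by (auto simp: T_def)
      have cT: "card T < J"
      proof (rule ccontr)
        assume "\<not> card T < J"
        then obtain B where B: "B \<subseteq> T" "card B = J" "finite B"
          by (meson not_less obtain_subset_with_card_n)
        have "B \<noteq> {}" using B J1 by auto
        hence "(\<Sum>b\<in>B. thr) < (\<Sum>b\<in>B. E b)"
          using B by (intro sum_strict_mono) (auto simp: T_def)
        moreover have "(\<Sum>b\<in>B. E b) \<le> real J * thr" using B TS by (intro bJ) auto
        ultimately show False using B by simp
      qed
      have finT: "finite T" using TS finS finite_subset by blast
      have "J - card T \<le> card (Fp_star p - T)" using JS cT finT TS by (simp add: card_Diff_subset)
      then obtain R where R: "R \<subseteq> Fp_star p - T" "card R = J - card T" "finite R"
        by (meson obtain_subset_with_card_n)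
      define B where "B = T \<union> R"
      have BS: "B \<subseteq> Fp_star p" using R TS by (auto simp: B_def)
      have cB: "card B = J" unfolding B_def using R finT cT by (subst card_Un_disjoint) auto
      have outB: "E b \<le> thr" if "b \<in> Fp_star p - B" for b
        using that by (auto simp: B_def T_def)
      have split: "S = (\<Sum>b\<in>B. mu b * sqrt (E b)) + (\<Sum>b\<in>Fp_star p - B. mu b * sqrt (E b))"
        unfolding S_def using sum.subset_diff[OF BS finS] by (simp add: add.commute)
      have part2: "(\<Sum>b\<in>Fp_star p - B. mu b * sqrt (E b)) \<le> sqrt thr"
      proof -
        have "(\<Sum>b\<in>Fp_star p - B. mu b * sqrt (E b)) \<le> (\<Sum>b\<in>Fp_star p - B. mu b * sqrt thr)"
          using SF mu0 outB by (intro sum_mono mult_left_mono) auto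
        also have "\<dots> = (\<Sum>b\<in>Fp_star p - B. mu b) * sqrt thr" by (simp add: sum_distrib_right)
        also have "\<dots> \<le> sqrt thr"
          using muS[of "Fp_star p - B"] SF mu0 thr0 by (intro mult_left_le_one_le) (auto intro: sum_nonneg)
        finally show ?thesis .
      qed
      have part1: "(\<Sum>b\<in>B. mu b * sqrt (E b)) \<le> D * sqrt (real J * thr)"
      proof -
        have "(\<Sum>b\<in>B. mu b * sqrt (E b)) \<le> sqrt (\<Sum>b\<in>B. (mu b)\<^sup>2) * sqrt (\<Sum>b\<in>B. E b)"
          by (rule cs_sqrt) (simp add: E0)
        also have "\<dots> \<le> D * sqrt (real J * thr)"
        proof (rule mult_mono)
          show "sqrt (\<Sum>b\<in>B. (mu b)\<^sup>2) \<le> D" using muL[of B] BS SF LD by (meson order_trans)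
          show "sqrt (\<Sum>b\<in>B. E b) \<le> sqrt (real J * thr)" using bJ[OF BS cB] by simp
        qed (use Dpos E0 in \<open>auto intro: sum_nonneg\<close>)
        finally show ?thesis .
      qed
      have DJ: "D * sqrt (real J) \<le> 1"
      proof -
        have "sqrt (real J) \<le> sqrt x" using Jx by simp
        also have "sqrt x = 1 / D" unfolding x_def using Dpos by (simp add: real_sqrt_divide)
        finally show ?thesis using Dpos by (simp add: divide_simps mult.commute)
      qed
      have "S \<le> D * sqrt (real J * thr) + sqrt thr" using split part1 part2 by linarith
      also have "\<dots> = (D * sqrt (real J) + 1) * sqrt thr" by (simp add: real_sqrt_mult distrib_right)
      also have "\<dots> \<le> 2 * sqrt thr" using DJ thr0 by (intro mult_right_mono) auto
      finally have S2: "S \<le> 2 * sqrt thr" .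
      have st: "sqrt thr = (sqrt K' * n powr (3/2)) * real J powr (- c0 / 2)"
        unfolding thr_def using n32 by (simp add: real_sqrt_mult sqrt_powr)
      have jp1: "real J powr (- c0 / 2) \<le> (x/2) powr (- c0 / 2)"
        using Jx2 x1 assms(1) by (intro powr_mono2') auto
      have jp2: "(x/2) powr (- c0 / 2) = 2 powr (c0/2) * D powr c0"
      proof -
        have "(x/2) powr (- c0 / 2) = x powr (- c0/2) * 2 powr (c0/2)"
          using x1 by (simp add: powr_divide powr_minus divide_simps)
        moreover have "x = D powr (-2)" unfolding x_def using Dpos by (simp add: powr_minus powr_realpow inverse_eq_divide)
        ultimately show ?thesis using Dpos by (simp add: powr_powr mult.commute)
      qed
      have nn: "sqrt K' * n powr (3/2) \<ge> 0" using K'0 by simp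
      have "sqrt thr \<le> (sqrt K' * n powr (3/2)) * (2 powr (c0/2) * D powr c0)"
        unfolding st using jp1 jp2 nn by (intro mult_left_mono) auto
      hence "S \<le> (sqrt K' * 2 * 2 powr (c0/2)) * (D powr c0 * n powr (3/2))"
        using S2 by (simp add: mult_ac)
      also have "\<dots> \<le> C * (D powr c0 * n powr (3/2))"
        unfolding C_def using K'0 by (intro mult_right_mono) auto
      finally have "S \<le> C * D powr c0 * n powr (3/2)" by (simp add: mult_ac)
      then show ?thesis using LHS by linarith
    qed
  qed
qed

end
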